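(* Let $m\ge 2$ candidates and $n$ voters be given, let $2\le\ell\le m$, and run the randomized Minimax algorithm described in the context. For each candidate $c$, let $c_{\min}\in\arg\min_{c'\neq c}\mathrm{sc}_{\mathrm{MM}}(c,c')$. Then for every $\epsilon\in(0,1]$, the probability that the normalized score $\mathrm{S}[c]$ computed by the algorithm for $c$ differs from the true Minimax score $\mathrm{sc}_{\mathrm{MM}}(c)$ by a multiplicative factor of at least $1\pm\epsilon$ (i.e. $\mathrm{S}[c]<(1-\epsilon)\mathrm{sc}_{\mathrm{MM}}(c)$ or $\mathrm{S}[c]>(1+\epsilon)\mathrm{sc}_{\mathrm{MM}}(c)$) is at most $$m\exp\!\left(-\frac{\epsilon^2\ell^2\,\mathrm{sc}_{\mathrm{MM}}(c,c_{\min})}{6m^2}\right).$$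
   Context: An election consists of a set $V$ of $n$ voters and a set $C$ of $m$ candidates; each voter $v$ has a strict linear order $\succ_v$ over $C$. For $c,c'\in C$, $\mathrm{sc}_{\mathrm{MM}}(c,c')=|\{v\in V: c\succ_v c'\}|$, and the Minimax score is $\mathrm{sc}_{\mathrm{MM}}(c)=\min_{c'\neq c}\mathrm{sc}_{\mathrm{MM}}(c,c')$; the Minimax rule selects the candidates with maximal Minimax score. Randomized Minimax algorithm: set $\mathrm{S}[c,c']=0$ for all $c,c'$. Independently for each voter $v$, choose a uniformly random $S_v\subseteq C$ with $|S_v|=\ell$ and ask $v$ to rank $S_v$; for every ordered pair of distinct $c,c'\in S_v$ with $c\succ_v c'$, increase $\mathrm{S}[c,c']$ by 1. Then for each $c$ set $\mathrm{S}[c]=n\cdot\min\{\mathrm{S}[c,c']/(\mathrm{S}[c,c']+\mathrm{S}[c',c]) : c'\neq c,\ \mathrm{S}[c,c']+\mathrm{S}[c',c]>0\}$, and return a candidate with maximal $\mathrm{S}[c]$. *)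

theory Defs
  imports "HOL-Probability.Probability"
begin

text \<open>Election: finite voter set V, finite candidate set C, preference profile
  P v = strict linear order of voter v on C, as a relation: (c, c') in P v means c is preferred to c'.\<close>

definition election :: "'v set \<Rightarrow> 'a set \<Rightarrow> ('v \<Rightarrow> ('a \<times> 'a) set) \<Rightarrow> bool" where
  "election V C P \<longleftrightarrow> finite V \<and> finite C \<and>
     (\<forall>v\<in>V. strict_linear_order_on C (P v) \<and> P v \<subseteq> C \<times> C)"

definition sc_pair :: "'v set \<Rightarrow> ('v \<Rightarrow> ('a \<times> 'a) set) \<Rightarrow> 'a \<Rightarrow> 'a \<Rightarrow> nat" where
  "sc_pair V P c c' = card {v \<in> V. (c, c') \<in> P v}"

definition sc_MM :: "'v set \<Rightarrow> 'a set \<Rightarrow> ('v \<Rightarrow> ('a \<times> 'a) set) \<Rightarrow> 'a \<Rightarrow> nat" where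
  "sc_MM V C P c = Min {sc_pair V P c c' | c'. c' \<in> C \<and> c' \<noteq> c}"

text \<open>Randomness of the algorithm: independently for each voter a uniformly random
  l-subset of C (voters outside V get the empty set, irrelevant).\<close>
definition sample_subsets :: "'v set \<Rightarrow> 'a set \<Rightarrow> nat \<Rightarrow> ('v \<Rightarrow> 'a set) pmf" where
  "sample_subsets V C l = Pi_pmf V {} (\<lambda>v. pmf_of_set {S. S \<subseteq> C \<and> card S = l})"

definition S_pair :: "'v set \<Rightarrow> ('v \<Rightarrow> ('a \<times> 'a) set) \<Rightarrow> ('v \<Rightarrow> 'a set) \<Rightarrow> 'a \<Rightarrow> 'a \<Rightarrow> nat" where
  "S_pair V P \<sigma> c c' = card {v \<in> V. c \<in> \<sigma> v \<and> c' \<in> \<sigma> v \<and> (c, c') \<in> P v}"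

definition S_ratios :: "'v set \<Rightarrow> 'a set \<Rightarrow> ('v \<Rightarrow> ('a \<times> 'a) set) \<Rightarrow> ('v \<Rightarrow> 'a set) \<Rightarrow> 'a \<Rightarrow> real set" where
  "S_ratios V C P \<sigma> c =
     {real (S_pair V P \<sigma> c c') / real (S_pair V P \<sigma> c c' + S_pair V P \<sigma> c' c) | c'.
        c' \<in> C \<and> c' \<noteq> c \<and> S_pair V P \<sigma> c c' + S_pair V P \<sigma> c' c > 0}"

text \<open>S[c] = n * min of the ratios; None if the minimum ranges over the empty set
  (then the algorithm produces no value, which we count as a failure).\<close>
definition S_score :: "'v set \<Rightarrow> 'a set \<Rightarrow> ('v \<Rightarrow> ('a \<times> 'a) set) \<Rightarrow> ('v \<Rightarrow> 'a set) \<Rightarrow> 'a \<Rightarrow> real option" where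
  "S_score V C P \<sigma> c =
     (if S_ratios V C P \<sigma> c = {} then None
      else Some (real (card V) * Min (S_ratios V C P \<sigma> c)))"

definition deviates :: "'v set \<Rightarrow> 'a set \<Rightarrow> ('v \<Rightarrow> ('a \<times> 'a) set) \<Rightarrow> real \<Rightarrow> 'a \<Rightarrow> ('v \<Rightarrow> 'a set) \<Rightarrow> bool" where
  "deviates V C P \<epsilon> c \<sigma> =
     (case S_score V C P \<sigma> c of
        None \<Rightarrow> True
      | Some s \<Rightarrow> s < (1 - \<epsilon>) * real (sc_MM V C P c) \<or> s > (1 + \<epsilon>) * real (sc_MM V C P c))"

end

theory Submission
  imports Defs
begin


lemma exp_quad:
  fixes t :: real assumes "t \<le> 2/3"
  shows "exp t \<le> 1 + t + 3/4 * t\<^sup>2"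
proof -
  obtain th where th: "\<bar>th\<bar> \<le> \<bar>t\<bar>" and e: "exp t = (\<Sum>m<3. t ^ m / fact m) + exp th / fact 3 * t ^ 3"
    using Maclaurin_exp_le[of t 3] by blast
  have e': "exp t = 1 + t + t\<^sup>2/2 + exp th / 6 * t^3"
    using e by (simp add: numeral_3_eq_3 fact_numeral power2_eq_square)
  show ?thesis
  proof (cases "t \<le> 0")
    case True
    have "exp th / 6 * t^3 \<le> 0"
      using True by (simp add: mult_nonneg_nonpos power3_eq_cube mult_nonpos_nonpos zero_le_mult_iff)
    then show ?thesis using e' zero_le_power2[of t] by linarith
  next
    case False
    have "exp th \<le> exp t" using th False by simp
    also have "\<dots> \<le> 1 + t + t\<^sup>2" using exp_bound[of t] False assms by simp
    also have "\<dots> \<le> 19/9"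
    proof -
      have "t\<^sup>2 \<le> (2/3)\<^sup>2" using False assms by (intro power_mono) auto
      then show ?thesis using assms by (simp add: power2_eq_square)
    qed
    finally have eth: "exp th \<le> 19/9" .
    have "exp th / 6 * t^3 \<le> (19/9) / 6 * t^3"
      using eth False by (intro mult_right_mono) auto
    also have "\<dots> = (19/54) * t * t\<^sup>2" by (simp add: power2_eq_square power3_eq_cube)
    also have "\<dots> \<le> (19/54) * (2/3) * t\<^sup>2"
      using False assms by (intro mult_right_mono) auto
    finally have "exp th / 6 * t^3 \<le> (19/54) * (2/3) * t\<^sup>2" .
    then show ?thesis using e' zero_le_power2[of t] by linarith
  qed
qed

lemma analytic_U:
  fixes a b \<epsilon> :: real
  assumes a: "0 < a" and b: "0 \<le> b" and e0: "0 < \<epsilon>" and e1: "\<epsilon> \<le> 1"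
  defines "lam \<equiv> 2 * \<epsilon> / (3 * (a + b))"
  shows "a * (exp (lam * (b - \<epsilon> * a)) - 1) + b * (exp (lam * (- ((1 + \<epsilon>) * a))) - 1) \<le> - (\<epsilon>\<^sup>2 * a / 3)"
proof -
  define x where "x = lam * (b - \<epsilon> * a)"
  define y where "y = lam * (- ((1 + \<epsilon>) * a))"
  have ab: "0 < a + b" using a b by simp
  have lam: "lam * (a + b) = 2 * \<epsilon> / 3" "lam \<ge> 0" using ab e0 by (auto simp: lam_def field_simps)
  have ea: "0 \<le> \<epsilon> * a" using e0 a by simp
  have "x \<le> lam * (a + b)" unfolding x_def using lam a b ea
    by (intro mult_left_mono) auto
  hence x23: "x \<le> 2/3" using lam e1 by simp
  have "0 \<le> (1 + \<epsilon>) * a" using e0 a by simp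
  hence "y \<le> 0" unfolding y_def using lam(2) by (simp add: mult_nonneg_nonpos)
  hence y23: "y \<le> 2/3" by simp
  have ex: "exp x - 1 \<le> x + 3/4 * x\<^sup>2" using exp_quad[OF x23] by simp
  have ey: "exp y - 1 \<le> y + 3/4 * y\<^sup>2" using exp_quad[OF y23] by simp
  have "a * (exp x - 1) + b * (exp y - 1) \<le> a * (x + 3/4 * x\<^sup>2) + b * (y + 3/4 * y\<^sup>2)"
    using ex ey a b by (intro add_mono mult_left_mono) auto
  also have "\<dots> = (a * x + b * y) + 3/4 * (a * x\<^sup>2 + b * y\<^sup>2)" by (simp add: algebra_simps)
  also have "a * x + b * y = - (lam * (a + b)) * \<epsilon> * a" unfolding x_def y_def by (simp add: algebra_simps)
  also have "a * x\<^sup>2 + b * y\<^sup>2 = lam\<^sup>2 * a * ((b - \<epsilon> * a)\<^sup>2 + (1 + \<epsilon>)\<^sup>2 * a * b)"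
    unfolding x_def y_def by (simp add: algebra_simps power2_eq_square)
  also have "\<dots> \<le> lam\<^sup>2 * a * (a + b)\<^sup>2"
  proof -
    have "(b - \<epsilon> * a)\<^sup>2 + (1 + \<epsilon>)\<^sup>2 * a * b = (a + b)\<^sup>2 - (1 - \<epsilon>\<^sup>2) * a * (a + b)"
      by (simp add: algebra_simps power2_eq_square)
    moreover have "0 \<le> (1 - \<epsilon>\<^sup>2) * a * (a + b)"
      using a b e0 e1 by (intro mult_nonneg_nonneg) (auto simp: power_le_one)
    ultimately show ?thesis using a by (intro mult_left_mono) auto
  qed
  also have "lam\<^sup>2 * a * (a + b)\<^sup>2 = (lam * (a + b))\<^sup>2 * a" by (simp add: power_mult_distrib)
  finally have "a * (exp x - 1) + b * (exp y - 1) \<le> - (2 * \<epsilon> / 3) * \<epsilon> * a + 3/4 * ((2 * \<epsilon> / 3)\<^sup>2 * a)"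
    using lam by simp
  also have "\<dots> = - (\<epsilon>\<^sup>2 * a / 3)" by (simp add: power2_eq_square field_simps)
  finally show ?thesis unfolding x_def y_def .
qed

lemma analytic_L:
  fixes a b \<epsilon> :: real
  assumes a: "0 < a" and b: "0 \<le> b" and e0: "0 < \<epsilon>" and e1: "\<epsilon> \<le> 1"
  defines "lam \<equiv> 2 * \<epsilon> / (3 * (a + b))"
  shows "a * (exp (lam * ((1 - \<epsilon>) * a - (a + b))) - 1) + b * (exp (lam * ((1 - \<epsilon>) * a)) - 1) \<le> - (\<epsilon>\<^sup>2 * a / 3)"
proof -
  define x where "x = lam * ((1 - \<epsilon>) * a - (a + b))"
  define y where "y = lam * ((1 - \<epsilon>) * a)"
  have ab: "0 < a + b" using a b by simp
  have lam: "lam * (a + b) = 2 * \<epsilon> / 3" "lam \<ge> 0" using ab e0 by (auto simp: lam_def field_simps)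
  have "y \<le> lam * (a + b)" unfolding y_def using lam a b e0 e1
    by (intro mult_left_mono) (auto simp: algebra_simps)
  hence y23: "y \<le> 2/3" using lam e1 by simp
  have ea: "0 \<le> \<epsilon> * a" using e0 a by simp
  have "(1 - \<epsilon>) * a - (a + b) \<le> 0" using ea b by (simp add: algebra_simps)
  hence "x \<le> 0" unfolding x_def using lam(2) by (simp add: mult_nonneg_nonpos)
  hence x23: "x \<le> 2/3" by simp
  have ex: "exp x - 1 \<le> x + 3/4 * x\<^sup>2" using exp_quad[OF x23] by simp
  have ey: "exp y - 1 \<le> y + 3/4 * y\<^sup>2" using exp_quad[OF y23] by simp
  have "a * (exp x - 1) + b * (exp y - 1) \<le> a * (x + 3/4 * x\<^sup>2) + b * (y + 3/4 * y\<^sup>2)"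
    using ex ey a b by (intro add_mono mult_left_mono) auto
  also have "\<dots> = (a * x + b * y) + 3/4 * (a * x\<^sup>2 + b * y\<^sup>2)" by (simp add: algebra_simps)
  also have "a * x + b * y = - (lam * (a + b)) * \<epsilon> * a" unfolding x_def y_def by (simp add: algebra_simps)
  also have "a * x\<^sup>2 + b * y\<^sup>2 = lam\<^sup>2 * a * ((b + \<epsilon> * a)\<^sup>2 + (1 - \<epsilon>)\<^sup>2 * a * b)"
    unfolding x_def y_def by (simp add: algebra_simps power2_eq_square)
  also have "\<dots> \<le> lam\<^sup>2 * a * (a + b)\<^sup>2"
  proof -
    have "(b + \<epsilon> * a)\<^sup>2 + (1 - \<epsilon>)\<^sup>2 * a * b = (a + b)\<^sup>2 - (1 - \<epsilon>\<^sup>2) * a * (a + b)"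
      by (simp add: algebra_simps power2_eq_square)
    moreover have "0 \<le> (1 - \<epsilon>\<^sup>2) * a * (a + b)"
      using a b e0 e1 by (intro mult_nonneg_nonneg) (auto simp: power_le_one)
    ultimately show ?thesis using a by (intro mult_left_mono) auto
  qed
  also have "lam\<^sup>2 * a * (a + b)\<^sup>2 = (lam * (a + b))\<^sup>2 * a" by (simp add: power_mult_distrib)
  finally have "a * (exp x - 1) + b * (exp y - 1) \<le> - (2 * \<epsilon> / 3) * \<epsilon> * a + 3/4 * ((2 * \<epsilon> / 3)\<^sup>2 * a)"
    using lam by simp
  also have "\<dots> = - (\<epsilon>\<^sup>2 * a / 3)" by (simp add: power2_eq_square field_simps)
  finally show ?thesis unfolding x_def y_def .
qed



lemma pref_iff:
  assumes el: "election V C P" and v: "v \<in> V" and c: "c \<in> C" "c' \<in> C" "c \<noteq> c'"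
  shows "(c', c) \<in> P v \<longleftrightarrow> (c, c') \<notin> P v"
proof -
  have so: "strict_linear_order_on C (P v)" using el v by (auto simp: election_def)
  hence tr: "trans (P v)" and ir: "irrefl (P v)" and to: "total_on C (P v)"
    by (auto simp: strict_linear_order_on_def)
  have "(c, c') \<in> P v \<or> (c', c) \<in> P v" using to c by (auto simp: total_on_def)
  moreover have "\<not> ((c, c') \<in> P v \<and> (c', c) \<in> P v)"
    using tr ir by (auto simp: irrefl_def dest: transD)
  ultimately show ?thesis by blast
qed

lemma real_card_filter:
  assumes "finite A"
  shows "real (card {x\<in>A. Q x}) = (\<Sum>x\<in>A. if Q x then 1 else 0)"
  using assms by (simp add: sum.If_cases Int_def)

lemma card_pair_subsets:
  assumes fin: "finite C" and c: "c \<in> C" "c' \<in> C" "c \<noteq> c'" and l: "2 \<le> l"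
  shows "card {S. S \<subseteq> C \<and> card S = l \<and> c \<in> S \<and> c' \<in> S} = (card C - 2) choose (l - 2)"
proof -
  define D where "D = C - {c, c'}"
  have finD: "finite D" using fin by (simp add: D_def)
  have cardD: "card D = card C - 2" using c fin by (simp add: D_def card_Diff_subset)
  have eq: "{S. S \<subseteq> C \<and> card S = l \<and> c \<in> S \<and> c' \<in> S}
      = (\<lambda>T. insert c (insert c' T)) ` {T. T \<subseteq> D \<and> card T = l - 2}"
  proof (intro equalityI subsetI)
    fix S assume "S \<in> {S. S \<subseteq> C \<and> card S = l \<and> c \<in> S \<and> c' \<in> S}"
    hence S: "S \<subseteq> C" "card S = l" "c \<in> S" "c' \<in> S" by auto
    have finS: "finite S" using S(1) fin finite_subset by blast
    have "card (S - {c, c'}) = card S - card {c, c'}"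
      using S finS by (intro card_Diff_subset) auto
    hence "card (S - {c, c'}) = l - 2" using S c by simp
    moreover have "S - {c, c'} \<subseteq> D" using S by (auto simp: D_def)
    moreover have "S = insert c (insert c' (S - {c, c'}))" using S by auto
    ultimately show "S \<in> (\<lambda>T. insert c (insert c' T)) ` {T. T \<subseteq> D \<and> card T = l - 2}" by blast
  next
    fix S assume "S \<in> (\<lambda>T. insert c (insert c' T)) ` {T. T \<subseteq> D \<and> card T = l - 2}"
    then obtain T where T: "T \<subseteq> D" "card T = l - 2" and S: "S = insert c (insert c' T)" by auto
    have finT: "finite T" using T(1) finD finite_subset by blast
    have "c \<notin> T" "c' \<notin> T" using T(1) by (auto simp: D_def)
    hence "card S = card T + 2" using S finT c by simp
    hence "card S = l" using T l by simp
    moreover have "S \<subseteq> C" using S T c by (auto simp: D_def)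
    ultimately show "S \<in> {S. S \<subseteq> C \<and> card S = l \<and> c \<in> S \<and> c' \<in> S}" using S by auto
  qed
  have inj: "inj_on (\<lambda>T. insert c (insert c' T)) {T. T \<subseteq> D \<and> card T = l - 2}"
  proof (rule inj_onI)
    fix T1 T2 assume "T1 \<in> {T. T \<subseteq> D \<and> card T = l - 2}" "T2 \<in> {T. T \<subseteq> D \<and> card T = l - 2}"
      and e: "insert c (insert c' T1) = insert c (insert c' T2)"
    hence "c \<notin> T1" "c' \<notin> T1" "c \<notin> T2" "c' \<notin> T2" by (auto simp: D_def)
    hence "T1 = insert c (insert c' T1) - {c, c'}" "T2 = insert c (insert c' T2) - {c, c'}" by auto
    thus "T1 = T2" using e by simp
  qed
  show ?thesis unfolding eq using card_image[OF inj] n_subsets[OF finD] cardD by simp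
qed

lemma binom_ratio:
  assumes "2 \<le> l" "l \<le> m"
  shows "real (m choose l) * (real l * (real l - 1)) = real m * (real m - 1) * real ((m - 2) choose (l - 2))"
proof -
  obtain m' l' where m: "m = m' + 2" and l: "l = l' + 2" using assms
    by (metis add.commute le_Suc_ex le_trans)
  have h1: "Suc (m'+1) * ((m'+1) choose (l'+1)) = (Suc (m'+1) choose Suc (l'+1)) * Suc (l'+1)"
    by (rule Suc_times_binomial_eq)
  have h2: "Suc m' * (m' choose l') = (Suc m' choose Suc l') * Suc l'"
    by (rule Suc_times_binomial_eq)
  have "(m choose l) * (l * (l - 1)) = m * (m - 1) * ((m - 2) choose (l - 2))"
  proof -
    have "(m choose l) * (l * (l - 1)) = ((m' + 2) choose (l' + 2)) * (l' + 2) * (l' + 1)"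
      using m l by (simp add: algebra_simps)
    also have "\<dots> = (m' + 2) * ((m'+1) choose (l'+1)) * (l' + 1)"
      using h1 by (simp add: algebra_simps)
    also have "\<dots> = (m' + 2) * (m' + 1) * (m' choose l')"
      using h2 by (simp add: algebra_simps)
    also have "\<dots> = m * (m - 1) * ((m - 2) choose (l - 2))" using m l by simp
    finally show ?thesis .
  qed
  hence "real ((m choose l) * (l * (l - 1))) = real (m * (m - 1) * ((m - 2) choose (l - 2)))" by simp
  thus ?thesis using assms by (simp add: of_nat_diff)
qed

lemma pair_prob:
  assumes fin: "finite C" and c: "c \<in> C" "c' \<in> C" "c \<noteq> c'" and l: "2 \<le> l" "l \<le> card C"
  shows "real (card {S. S \<subseteq> C \<and> card S = l \<and> c \<in> S \<and> c' \<in> S}) / real (card {S. S \<subseteq> C \<and> card S = l})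
     = real l * (real l - 1) / (real (card C) * (real (card C) - 1))"
proof -
  have pos: "0 < card C choose l" using l by simp
  have m2: "real (card C) * (real (card C) - 1) > 0" using l by (simp add: mult_pos_pos)
  have N0: "real (card C choose l) \<noteq> 0" using pos by simp
  have m2': "real (card C) * (real (card C) - 1) \<noteq> 0" using m2 by (metis order_less_irrefl)
  have br: "real (card C choose l) * (real l * (real l - 1)) = real (card C) * (real (card C) - 1) * real ((card C - 2) choose (l - 2))"
    by (rule binom_ratio[OF l])
  show ?thesis
    unfolding card_pair_subsets[OF fin c l(1)] n_subsets[OF fin] frac_eq_eq[OF N0 m2']
    using br by (metis mult.commute)
qed


lemma chernoff_pair:
  fixes \<alpha> \<beta> lam :: real
  assumes el: "election V C P" and c: "c \<in> C" "c' \<in> C" "c \<noteq> c'"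
    and l: "2 \<le> l" "l \<le> card C" and lam: "0 \<le> lam"
  shows "measure_pmf.prob (sample_subsets V C l)
           {\<sigma>. 0 \<le> \<alpha> * real (S_pair V P \<sigma> c c') + \<beta> * real (S_pair V P \<sigma> c' c)}
         \<le> exp (real l * (real l - 1) / (real (card C) * (real (card C) - 1)) *
              (real (sc_pair V P c c') * (exp (lam * \<alpha>) - 1) + real (sc_pair V P c' c) * (exp (lam * \<beta>) - 1)))"
proof -
  have finV: "finite V" and finC: "finite C" using el by (auto simp: election_def)
  define SS where "SS = {S. S \<subseteq> C \<and> card S = l}"
  define q where "q = real l * (real l - 1) / (real (card C) * (real (card C) - 1))"
  define K where "K = {S. S \<subseteq> C \<and> card S = l \<and> c \<in> S \<and> c' \<in> S}"
  have finSS: "finite SS" unfolding SS_def using finC by (auto intro: finite_subset[of _ "Pow C"])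
  have neSS: "SS \<noteq> {}"
  proof -
    obtain T where "T \<subseteq> C" "card T = l" using obtain_subset_with_card_n[OF l(2)] by metis
    thus ?thesis by (auto simp: SS_def)
  qed
  have q: "real (card K) / real (card SS) = q"
    unfolding K_def SS_def q_def by (rule pair_prob[OF finC c l])
  have KSS: "{S \<in> SS. c \<in> S \<and> c' \<in> S} = K" by (auto simp: SS_def K_def)
  define M where "M = sample_subsets V C l"
  have M: "M = Pi_pmf V {} (\<lambda>v. pmf_of_set SS)" unfolding M_def sample_subsets_def SS_def ..
  define w where "w v = (if (c, c') \<in> P v then \<alpha> else \<beta>)" for v
  define d where "d v S = (if c \<in> S \<and> c' \<in> S then w v else 0)" for v S
  define D where "D \<sigma> = \<alpha> * real (S_pair V P \<sigma> c c') + \<beta> * real (S_pair V P \<sigma> c' c)" for \<sigma>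
  have Dsum: "D \<sigma> = (\<Sum>v\<in>V. d v (\<sigma> v))" for \<sigma>
  proof -
    have "D \<sigma> = (\<Sum>v\<in>V. \<alpha> * (if c \<in> \<sigma> v \<and> c' \<in> \<sigma> v \<and> (c, c') \<in> P v then 1 else 0)
                     + \<beta> * (if c' \<in> \<sigma> v \<and> c \<in> \<sigma> v \<and> (c', c) \<in> P v then 1 else 0))"
      unfolding D_def S_pair_def real_card_filter[OF finV] sum.distrib sum_distrib_left ..
    also have "\<dots> = (\<Sum>v\<in>V. d v (\<sigma> v))"
    proof (intro sum.cong refl)
      fix v assume v: "v \<in> V"
      show "\<alpha> * (if c \<in> \<sigma> v \<and> c' \<in> \<sigma> v \<and> (c, c') \<in> P v then 1 else 0)
                     + \<beta> * (if c' \<in> \<sigma> v \<and> c \<in> \<sigma> v \<and> (c', c) \<in> P v then 1 else 0) = d v (\<sigma> v)"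
        using pref_iff[OF el v c] by (auto simp: d_def w_def)
    qed
    finally show ?thesis .
  qed
  have finM: "finite (set_pmf M)"
    unfolding M using finV finSS neSS by (auto simp: set_Pi_pmf intro!: finite_PiE_dflt)
  have "measure_pmf.prob M {\<sigma>. 0 \<le> D \<sigma>} = measure_pmf.expectation M (indicator {\<sigma>. 0 \<le> D \<sigma>})"
    by simp
  also have "\<dots> \<le> measure_pmf.expectation M (\<lambda>\<sigma>. \<Prod>v\<in>V. exp (lam * d v (\<sigma> v)))"
  proof (rule integral_mono)
    show "integrable (measure_pmf M) (indicator {\<sigma>. 0 \<le> D \<sigma>} :: _ \<Rightarrow> real)"
      using finM by (rule integrable_measure_pmf_finite)
    show "integrable (measure_pmf M) (\<lambda>\<sigma>. \<Prod>v\<in>V. exp (lam * d v (\<sigma> v)))"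
      using finM by (rule integrable_measure_pmf_finite)
    fix \<sigma>
    have e: "(\<Prod>v\<in>V. exp (lam * d v (\<sigma> v))) = exp (lam * D \<sigma>)"
      unfolding Dsum sum_distrib_left exp_sum[OF finV] ..
    show "indicator {\<sigma>. 0 \<le> D \<sigma>} \<sigma> \<le> (\<Prod>v\<in>V. exp (lam * d v (\<sigma> v)))"
      unfolding e using lam by (auto simp: indicator_def)
  qed
  also have "\<dots> = (\<Prod>v\<in>V. measure_pmf.expectation (pmf_of_set SS) (\<lambda>S. exp (lam * d v S)))"
    unfolding M
    by (rule expectation_prod_Pi_pmf[OF finV])
       (auto intro!: integrable_measure_pmf_finite simp: set_pmf_of_set[OF neSS finSS] finSS)
  also have "\<dots> = (\<Prod>v\<in>V. 1 + q * (exp (lam * w v) - 1))"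
  proof (intro prod.cong refl)
    fix v
    have "(\<Sum>S\<in>SS. exp (lam * d v S)) = (\<Sum>S\<in>SS. 1 + (if c \<in> S \<and> c' \<in> S then exp (lam * w v) - 1 else 0))"
      by (intro sum.cong refl) (auto simp: d_def)
    also have "\<dots> = real (card SS) + real (card K) * (exp (lam * w v) - 1)"
      unfolding sum.distrib sum.inter_filter[OF finSS, symmetric] KSS by simp
    finally have "(\<Sum>S\<in>SS. exp (lam * d v S)) / real (card SS) = 1 + real (card K) / real (card SS) * (exp (lam * w v) - 1)"
      using finSS neSS by (simp add: field_simps)
    thus "measure_pmf.expectation (pmf_of_set SS) (\<lambda>S. exp (lam * d v S)) = 1 + q * (exp (lam * w v) - 1)"
      using q by (simp add: integral_pmf_of_set[OF neSS finSS])
  qed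
  also have "\<dots> \<le> (\<Prod>v\<in>V. exp (q * (exp (lam * w v) - 1)))"
  proof (intro prod_mono conjI)
    fix v
    have "0 \<le> q" unfolding q[symmetric] by simp
    moreover have "q \<le> 1"
    proof -
      have "card K \<le> card SS" using finSS by (intro card_mono) (auto simp: K_def SS_def)
      thus ?thesis unfolding q[symmetric] using neSS finSS by (simp add: divide_le_eq_1 card_gt_0_iff)
    qed
    ultimately have "0 \<le> 1 - q + q * exp (lam * w v)" by (simp add: add_nonneg_nonneg)
    thus "0 \<le> 1 + q * (exp (lam * w v) - 1)" by (simp add: algebra_simps)
    show "1 + q * (exp (lam * w v) - 1) \<le> exp (q * (exp (lam * w v) - 1))" by simp
  qed
  also have "\<dots> = exp (q * (\<Sum>v\<in>V. exp (lam * w v) - 1))"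
    unfolding sum_distrib_left exp_sum[OF finV] ..
  also have "(\<Sum>v\<in>V. exp (lam * w v) - 1) = real (sc_pair V P c c') * (exp (lam * \<alpha>) - 1) + real (sc_pair V P c' c) * (exp (lam * \<beta>) - 1)"
  proof -
    have "(\<Sum>v\<in>V. exp (lam * w v) - 1) = (\<Sum>v\<in>V. (exp (lam * \<alpha>) - 1) * (if (c, c') \<in> P v then 1 else 0)
                                     + (exp (lam * \<beta>) - 1) * (if (c', c) \<in> P v then 1 else 0))"
      by (intro sum.cong refl) (auto simp: w_def pref_iff[OF el _ c])
    also have "\<dots> = real (sc_pair V P c c') * (exp (lam * \<alpha>) - 1) + real (sc_pair V P c' c) * (exp (lam * \<beta>) - 1)"
      unfolding sum.distrib sum_distrib_left[symmetric] sc_pair_def real_card_filter[OF finV] by simp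
    finally show ?thesis .
  qed
  finally show ?thesis unfolding M_def D_def q_def .
qed



theorem theorem3:
  fixes V :: "'v set" and C :: "'a set" and P :: "'v \<Rightarrow> ('a \<times> 'a) set"
    and l :: nat and c c_min :: 'a and \<epsilon> :: real
  assumes "election V C P"
    and "card C \<ge> 2"
    and "2 \<le> l" and "l \<le> card C"
    and "c \<in> C"
    and "c_min \<in> C" and "c_min \<noteq> c"
    and "\<forall>c'\<in>C. c' \<noteq> c \<longrightarrow> sc_pair V P c c_min \<le> sc_pair V P c c'"
    and "0 < \<epsilon>" and "\<epsilon> \<le> 1"
  shows "measure_pmf.prob (sample_subsets V C l) {\<sigma>. deviates V C P \<epsilon> c \<sigma>}
           \<le> real (card C) * exp (- (\<epsilon>\<^sup>2 * real l ^ 2 * real (sc_pair V P c c_min))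
                                  / (6 * real (card C) ^ 2))"
proof -
  note el = assms(1) and m2 = assms(2) and l = assms(3,4) and cC = assms(5)
    and cmin = assms(6,7) and minimal = assms(8) and e0 = assms(9) and e1 = assms(10)
  have finV: "finite V" and finC: "finite C" using el by (auto simp: election_def)
  define a where "a = sc_pair V P c c_min"
  define E where "E = exp (- (\<epsilon>\<^sup>2 * real l ^ 2 * real a) / (6 * real (card C) ^ 2))"
  define M where "M = sample_subsets V C l"
  show ?thesis
  proof (cases "a = 0")
    case True
    have "measure_pmf.prob M {\<sigma>. deviates V C P \<epsilon> c \<sigma>} \<le> 1" by simp
    also have "1 \<le> real (card C)" using m2 by simp
    finally show ?thesis using True unfolding M_def a_def by simp
  next
    case False
    hence apos: "0 < real a" by simp
    define q where "q = real l * (real l - 1) / (real (card C) * (real (card C) - 1))"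
    have mpos: "real (card C) > 1" using m2 by simp
    have q_lb: "real l ^ 2 / (2 * real (card C) ^ 2) \<le> q"
    proof -
      have "real l ^ 2 * (real (card C) * (real (card C) - 1)) \<le> real l * (real l - 1) * (2 * real (card C) ^ 2)"
      proof -
        have "real l ^ 2 * (real (card C) * (real (card C) - 1)) \<le> real l * (real l - 1) * (2 * real (card C) ^ 2)
              \<longleftrightarrow> 0 \<le> real l * real (card C) * (real (card C) * (real l - 2) + real l)"
          by (simp add: algebra_simps power2_eq_square)
        moreover have "0 \<le> real l * real (card C) * (real (card C) * (real l - 2) + real l)"
          using l by (intro mult_nonneg_nonneg) auto
        ultimately show ?thesis by blast
      qed
      moreover have "0 < 2 * real (card C) ^ 2" "0 < real (card C) * (real (card C) - 1)" using mpos by auto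
      ultimately show ?thesis unfolding q_def by (simp add: divide_simps)
    qed
    have q0: "0 \<le> q" using q_lb by (smt (verit) divide_nonneg_nonneg zero_le_power2)
    have bnd: "exp (q * g) \<le> E" if g: "g \<le> - (\<epsilon>\<^sup>2 * a' / 3)" and a': "real a \<le> a'" for g a'
    proof -
      have "q * g \<le> q * (- (\<epsilon>\<^sup>2 * a' / 3))" using g q0 by (rule mult_left_mono)
      also have "\<dots> \<le> q * (- (\<epsilon>\<^sup>2 * real a / 3))"
        using a' q0 by (intro mult_left_mono) (auto intro: mult_left_mono)
      also have "\<dots> \<le> (real l ^ 2 / (2 * real (card C) ^ 2)) * (- (\<epsilon>\<^sup>2 * real a / 3))"
        using q_lb apos by (intro mult_right_mono_neg) auto
      also have "\<dots> = - (\<epsilon>\<^sup>2 * real l ^ 2 * real a) / (6 * real (card C) ^ 2)"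
        by (simp add: field_simps)
      finally show ?thesis unfolding E_def by simp
    qed
    have tot: "real (sc_pair V P c c') + real (sc_pair V P c' c) = real (card V)"
      if "c' \<in> C" "c' \<noteq> c" for c'
    proof -
      have "real (sc_pair V P c c') + real (sc_pair V P c' c)
            = (\<Sum>v\<in>V. (if (c, c') \<in> P v then 1 else 0) + (if (c', c) \<in> P v then 1 else 0))"
        unfolding sc_pair_def real_card_filter[OF finV] sum.distrib ..
      also have "\<dots> = (\<Sum>v\<in>V. 1)"
        by (intro sum.cong refl) (use pref_iff[OF el _ cC that(1)] that(2) in auto)
      finally show ?thesis by simp
    qed
    define b0 where "b0 = sc_pair V P c_min c"
    define U where "U = {\<sigma>. 0 \<le> (real b0 - \<epsilon> * real a) * real (S_pair V P \<sigma> c c_min)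
                              + (- ((1 + \<epsilon>) * real a)) * real (S_pair V P \<sigma> c_min c)}"
    define L where "L c' = {\<sigma>. 0 \<le> ((1 - \<epsilon>) * real (sc_pair V P c c') - (real (sc_pair V P c c') + real (sc_pair V P c' c))) * real (S_pair V P \<sigma> c c')
                              + ((1 - \<epsilon>) * real (sc_pair V P c c')) * real (S_pair V P \<sigma> c' c)}" for c'
    define A where "A c' = (if c' = c then U else L c')" for c'
    have PU: "measure_pmf.prob M U \<le> E"
    proof -
      define lam where "lam = 2 * \<epsilon> / (3 * (real a + real b0))"
      have lam0: "0 \<le> lam" unfolding lam_def using e0 by simp
      have "measure_pmf.prob M U \<le> exp (q * (real a * (exp (lam * (real b0 - \<epsilon> * real a)) - 1)
                 + real b0 * (exp (lam * (- ((1 + \<epsilon>) * real a))) - 1)))"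
        unfolding M_def U_def q_def a_def b0_def
        by (rule chernoff_pair[OF el cC cmin(1) cmin(2)[symmetric] l lam0])
      also have "\<dots> \<le> E"
        by (rule bnd[OF analytic_U[OF apos _ e0 e1, of "real b0", folded lam_def]]) auto
      finally show ?thesis .
    qed
    have PL: "measure_pmf.prob M (L c') \<le> E" if c': "c' \<in> C" "c' \<noteq> c" for c'
    proof -
      define a' where "a' = sc_pair V P c c'"
      define b' where "b' = sc_pair V P c' c"
      have aa': "real a \<le> real a'" using minimal c' unfolding a_def a'_def by simp
      hence a'pos: "0 < real a'" using apos by simp
      define lam where "lam = 2 * \<epsilon> / (3 * (real a' + real b'))"
      have lam0: "0 \<le> lam" unfolding lam_def using e0 by simp
      have "measure_pmf.prob M (L c') \<le> exp (q * (real a' * (exp (lam * ((1 - \<epsilon>) * real a' - (real a' + real b'))) - 1)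
                 + real b' * (exp (lam * ((1 - \<epsilon>) * real a')) - 1)))"
        unfolding M_def L_def q_def a'_def b'_def
        by (rule chernoff_pair[OF el cC c'(1) c'(2)[symmetric] l lam0])
      also have "\<dots> \<le> E"
        by (rule bnd[OF analytic_L[OF a'pos _ e0 e1, of "real b'", folded lam_def] aa']) auto
      finally show ?thesis .
    qed
    have scMM: "sc_MM V C P c = a"
      unfolding sc_MM_def a_def
    proof (rule Min_eqI)
      show "finite {sc_pair V P c c' |c'. c' \<in> C \<and> c' \<noteq> c}" using finC by simp
      show "\<And>y. y \<in> {sc_pair V P c c' |c'. c' \<in> C \<and> c' \<noteq> c} \<Longrightarrow> sc_pair V P c c_min \<le> y"
        using minimal by auto
      show "sc_pair V P c c_min \<in> {sc_pair V P c c' |c'. c' \<in> C \<and> c' \<noteq> c}" using cmin by auto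
    qed
    have incl: "{\<sigma>. deviates V C P \<epsilon> c \<sigma>} \<subseteq> (\<Union>c'\<in>C. A c')"
    proof
      fix \<sigma> assume "\<sigma> \<in> {\<sigma>. deviates V C P \<epsilon> c \<sigma>}"
      hence dev: "deviates V C P \<epsilon> c \<sigma>" by simp
      define R where "R = S_ratios V C P \<sigma> c"
      define X where "X c' = real (S_pair V P \<sigma> c c')" for c'
      define Y where "Y c' = real (S_pair V P \<sigma> c' c)" for c'
      have finR: "finite R" unfolding R_def S_ratios_def using finC by simp
      have inR: "X c' / (X c' + Y c') \<in> R" if "c' \<in> C" "c' \<noteq> c" "S_pair V P \<sigma> c c' + S_pair V P \<sigma> c' c > 0" for c'
        using that unfolding R_def S_ratios_def X_def Y_def by auto
      have XY0: "X c' \<ge> 0" "Y c' \<ge> 0" for c' unfolding X_def Y_def by auto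
      have U0: "\<sigma> \<in> U" if "S_pair V P \<sigma> c c_min + S_pair V P \<sigma> c_min c = 0"
        using that unfolding U_def by simp
      have "\<sigma> \<in> U \<or> (\<exists>c'\<in>C. c' \<noteq> c \<and> \<sigma> \<in> L c')"
      proof (cases "R = {}")
        case True
        hence "S_pair V P \<sigma> c c_min + S_pair V P \<sigma> c_min c = 0"
          using inR[OF cmin(1) cmin(2)] by (metis empty_iff neq0_conv)
        thus ?thesis by (intro disjI1 U0)
      next
        case False
        have sc: "S_score V C P \<sigma> c = Some (real (card V) * Min R)"
          using False unfolding S_score_def R_def by simp
        have dev': "real (card V) * Min R < (1 - \<epsilon>) * real a \<or> real (card V) * Min R > (1 + \<epsilon>) * real a"
          using dev unfolding deviates_def sc scMM by simp
        have MinR: "Min R \<in> R" using finR False by (rule Min_in)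
        then obtain c' where c': "c' \<in> C" "c' \<noteq> c" and pos: "S_pair V P \<sigma> c c' + S_pair V P \<sigma> c' c > 0"
          and MinEq: "Min R = X c' / (X c' + Y c')"
          unfolding R_def S_ratios_def X_def Y_def by auto
        have XYpos: "X c' + Y c' > 0" using pos unfolding X_def Y_def
          by (metis of_nat_0_less_iff of_nat_add)
        show ?thesis
        proof (cases "real (card V) * Min R < (1 - \<epsilon>) * real a")
          case True
          define a' where "a' = real (sc_pair V P c c')"
          define b' where "b' = real (sc_pair V P c' c)"
          have n: "real (card V) = a' + b'" using tot[OF c'] unfolding a'_def b'_def by simp
          have aa': "real a \<le> a'" using minimal c' unfolding a_def a'_def by simp
          have "real (card V) * X c' / (X c' + Y c') < (1 - \<epsilon>) * real a"
            using True MinEq by simp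
          hence "real (card V) * X c' < (1 - \<epsilon>) * real a * (X c' + Y c')"
            using XYpos by (simp add: pos_divide_less_eq)
          also have "\<dots> \<le> (1 - \<epsilon>) * a' * (X c' + Y c')"
            using aa' e1 XYpos by (intro mult_right_mono mult_left_mono) auto
          finally have "0 \<le> (1 - \<epsilon>) * a' * (X c' + Y c') - (a' + b') * X c'" using n by simp
          also have "(1 - \<epsilon>) * a' * (X c' + Y c') - (a' + b') * X c'
                 = ((1 - \<epsilon>) * a' - (a' + b')) * X c' + ((1 - \<epsilon>) * a') * Y c'"
            by (simp add: algebra_simps)
          finally have "\<sigma> \<in> L c'" unfolding L_def a'_def b'_def X_def Y_def by simp
          thus ?thesis using c' by blast
        next
          case False
          hence up: "real (card V) * Min R > (1 + \<epsilon>) * real a" using dev' by simp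
          show ?thesis
          proof (cases "S_pair V P \<sigma> c c_min + S_pair V P \<sigma> c_min c = 0")
            case True thus ?thesis by (intro disjI1 U0)
          next
            case False
            hence posm: "S_pair V P \<sigma> c c_min + S_pair V P \<sigma> c_min c > 0" by simp
            have XYm: "X c_min + Y c_min > 0" using posm unfolding X_def Y_def
              by (metis of_nat_0_less_iff of_nat_add)
            have "Min R \<le> X c_min / (X c_min + Y c_min)"
              using finR inR[OF cmin(1) cmin(2) posm] by (rule Min_le)
            hence "real (card V) * Min R \<le> real (card V) * (X c_min / (X c_min + Y c_min))"
              by (intro mult_left_mono) auto
            with up have "(1 + \<epsilon>) * real a < real (card V) * X c_min / (X c_min + Y c_min)" by simp
            hence "(1 + \<epsilon>) * real a * (X c_min + Y c_min) < real (card V) * X c_min"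
              using XYm by (simp add: pos_less_divide_eq)
            moreover have "real (card V) = real a + real b0"
              using tot[OF cmin(1) cmin(2)] unfolding a_def b0_def by simp
            ultimately have "0 \<le> (real a + real b0) * X c_min - (1 + \<epsilon>) * real a * (X c_min + Y c_min)"
              by simp
            also have "(real a + real b0) * X c_min - (1 + \<epsilon>) * real a * (X c_min + Y c_min)
                = (real b0 - \<epsilon> * real a) * X c_min + (- ((1 + \<epsilon>) * real a)) * Y c_min"
              by (simp add: algebra_simps)
            finally have "\<sigma> \<in> U" unfolding U_def X_def Y_def by simp
            thus ?thesis by blast
          qed
        qed
      qed
      thus "\<sigma> \<in> (\<Union>c'\<in>C. A c')" using cC unfolding A_def by (auto split: if_splits)
    qed
    have "measure_pmf.prob M {\<sigma>. deviates V C P \<epsilon> c \<sigma>} \<le> measure_pmf.prob M (\<Union>c'\<in>C. A c')"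
      using incl by (intro measure_pmf.finite_measure_mono) auto
    also have "\<dots> \<le> (\<Sum>c'\<in>C. measure_pmf.prob M (A c'))"
      using finC by (intro measure_pmf.finite_measure_subadditive_finite) auto
    also have "\<dots> \<le> (\<Sum>c'\<in>C. E)"
      by (intro sum_mono) (auto simp: A_def PU PL)
    also have "\<dots> = real (card C) * E" by simp
    finally show ?thesis unfolding M_def E_def a_def .
  qed
qed

end
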